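(* Fix $n\in\mathbb N$, $z=x+iy\in\mathbb H$ and a simple type cusp $\mathfrak c$ of $\Gamma_n$. Let $z'=x'+iy'\in\mathbb H$ be such that $\Gamma_nz=\Gamma_n\tau_{\mathfrak c}z'$. Then $$\mathcal R_n(x,y)=\bigcup_{d\mid n}\mathcal R^{\rm pr}_{n/d}\left(x'_{\mathfrak c,d},\ d^2y'/\omega_{\mathfrak c}\right)$$ for some $x'_{\mathfrak c,d}\in\mathbb R/\mathbb Z$ depending only on $x'$, $\mathfrak c$ and $d$.
   Context: $\Gamma_1=\mathrm{SL}_2(\mathbb Z)$ and $\Gamma_n=\left\{\begin{pmatrix}a&b\\c&d\end{pmatrix}\in\Gamma_1:n^2\mid c,\ a\equiv d\equiv\pm1\pmod n\right\}$. Cusps of $\Gamma_n$ are $\Gamma_n$-orbits in $\mathbb Q\cup\{\infty\}$; a cusp is of simple type if it has a representative $m/q$ with $\gcd(m,q)=1$ and $\gcd(n^2,q)\mid n$. For a cusp $\mathfrak c$, $\tau_{\mathfrak c}\in\Gamma_1$ satisfies $\tau_{\mathfrak c}\infty=\mathfrak c$, and the width $\omega_{\mathfrak c}$ is the positive integer with $\tau_{\mathfrak c}^{-1}(\tau_{\mathfrak c}N\tau_{\mathfrak c}^{-1}\cap\Gamma_n)\tau_{\mathfrak c}=\langle\begin{pmatrix}1&\omega_{\mathfrak c}\\0&1\end{pmatrix}\rangle$, $N$ the upper-triangular unipotent subgroup (for $\mathfrak c=m/l$ in lowest terms, $\omega_{\mathfrak c}=n^2/\gcd(n,l)^2$). For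 $n\in\mathbb N$, $x\in\mathbb R/\mathbb Z$, $y>0$, in $\mathcal M=\Gamma_1\backslash\mathbb H$: $\mathcal R_n(x,y)=\{\Gamma_1(x+\tfrac jn+iy):0\le j\le n-1\}$, $\mathcal R^{\rm pr}_n(x,y)=\{\Gamma_1(x+\tfrac jn+iy):j\in(\mathbb Z/n\mathbb Z)^\times\}$ (with $(\mathbb Z/1\mathbb Z)^\times=\{0\}$). *)

theory Defs
  imports Complex_Main
begin

text \<open>2x2 integer matrices (a,b,c,d) standing for [[a,b],[c,d]].\<close>
type_synonym mat2 = "int \<times> int \<times> int \<times> int"

definition mmult :: "mat2 \<Rightarrow> mat2 \<Rightarrow> mat2" where
  "mmult A B = (case A of (a,b,c,d) \<Rightarrow> case B of (a',b',c',d') \<Rightarrow>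
     (a*a' + b*c', a*b' + b*d', c*a' + d*c', c*b' + d*d'))"

definition SL2Z :: "mat2 set" where
  "SL2Z = {(a,b,c,d). a*d - b*c = 1}"

definition minv :: "mat2 \<Rightarrow> mat2" where
  "minv A = (case A of (a,b,c,d) \<Rightarrow> (d, -b, -c, a))"

definition Gamma :: "nat \<Rightarrow> mat2 set" where
  "Gamma n = {(a,b,c,d). (a,b,c,d) \<in> SL2Z \<and> int n ^ 2 dvd c \<and>
     ((a mod int n = 1 mod int n \<and> d mod int n = 1 mod int n) \<or>
      (a mod int n = (-1) mod int n \<and> d mod int n = (-1) mod int n))}"

definition mob :: "mat2 \<Rightarrow> complex \<Rightarrow> complex" where
  "mob A z = (case A of (a,b,c,d) \<Rightarrow> (of_int a * z + of_int b) / (of_int c * z + of_int d))"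

definition orbit :: "mat2 set \<Rightarrow> complex \<Rightarrow> complex set" where
  "orbit G z = {mob g z | g. g \<in> G}"

text \<open>Simple type: the cusp Gamma_n (tau infinity) has a representative m/q (m,q coprime)
  with gcd(n^2,q) | n. Representatives of this cusp are exactly (gamma tau) infinity for
  gamma in Gamma_n, i.e. the first column (m,q) of gamma*tau (automatically coprime).\<close>
definition simple_type :: "nat \<Rightarrow> mat2 \<Rightarrow> bool" where
  "simple_type n \<tau> = (\<exists>\<gamma>\<in>Gamma n. case mmult \<gamma> \<tau> of (m,b,q,d) \<Rightarrow> gcd (int n ^ 2) q dvd int n)"

definition Tk :: "int \<Rightarrow> mat2" where
  "Tk k = (1, k, 0, 1)"

text \<open>Width: the positive integer omega such that
  tau^-1 (tau N tau^-1 \<inter> Gamma_n) tau = <T^omega>.\<close>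
definition width :: "nat \<Rightarrow> mat2 \<Rightarrow> nat" where
  "width n \<tau> = (THE \<omega>::nat. \<omega> > 0 \<and>
     {k::int. mmult (mmult \<tau> (Tk k)) (minv \<tau>) \<in> Gamma n} = {int \<omega> * j | j. True})"

text \<open>Points of M = Gamma_1 \ H as Gamma_1-orbits.\<close>
definition R :: "nat \<Rightarrow> real \<Rightarrow> real \<Rightarrow> complex set set" where
  "R n x y = {orbit SL2Z (Complex (x + real j / real n) y) | j. j < n}"

definition Rpr :: "nat \<Rightarrow> real \<Rightarrow> real \<Rightarrow> complex set set" where
  "Rpr n x y = {orbit SL2Z (Complex (x + real j / real n) y) | j. j < n \<and> coprime j n}"

end

theory Submission
  imports Defs "HOL-Number_Theory.Number_Theory"
begin

lemma mob_mult:
  assumes "of_int (fst (snd (snd B))) * z + of_int (snd (snd (snd B))) \<noteq> 0"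
  shows "mob (mmult A B) z = mob A (mob B z)"
proof -
  obtain a b c d where A: "A = (a,b,c,d)" by (cases A) auto
  obtain a' b' c' d' where B: "B = (a',b',c',d')" by (cases B) auto
  have nz: "of_int c' * z + of_int d' \<noteq> 0" using assms B by simp
  define p where "p = of_int c' * z + of_int d'"
  have e1: "of_int a * ((of_int a' * z + of_int b') / p) + of_int b =
     (of_int a * (of_int a' * z + of_int b') + of_int b * p) / p" using nz p_def by (simp add: field_simps)
  have e2: "of_int c * ((of_int a' * z + of_int b') / p) + of_int d =
     (of_int c * (of_int a' * z + of_int b') + of_int d * p) / p" using nz p_def by (simp add: field_simps)
  have pnz: "p \<noteq> 0" using nz p_def by simp
  have e3: "\<And>x y::complex. (x / p) / (y / p) = x / y" using pnz by (simp add: divide_divide_eq_left divide_divide_eq_right)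
  have "mob A (mob B z) = (of_int a * (of_int a' * z + of_int b') + of_int b * p) /
      (of_int c * (of_int a' * z + of_int b') + of_int d * p)"
    unfolding A B mob_def using e1 e2 e3 p_def by simp
  also have "\<dots> = mob (mmult A B) z" unfolding A B mob_def mmult_def p_def
    by simp (simp add: algebra_simps)
  finally show ?thesis by simp
qed

lemma denom_nz:
  assumes "Im z \<noteq> 0" "(c,d) \<noteq> ((0::int),(0::int))"
  shows "of_int c * z + of_int d \<noteq> 0"
proof
  assume h: "of_int c * z + of_int d = 0"
  hence "Im (of_int c * z + of_int d) = 0" by simp
  hence "c = 0" using assms(1) by simp
  with h assms show False by simp
qed

lemma SL2Z_nz: "(a,b,c,d) \<in> SL2Z \<Longrightarrow> (c,d) \<noteq> (0,0)"
  unfolding SL2Z_def by auto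

lemma Im_mob:
  "Im (mob (a,b,c,d) z) = of_int (a*d - b*c) * Im z / (cmod (of_int c * z + of_int d))^2"
  unfolding mob_def by (simp add: Im_divide' algebra_simps)

lemma SL2Z_Im_pos:
  assumes "g \<in> SL2Z" "Im z > 0" shows "Im (mob g z) > 0"
proof -
  obtain a b c d where g: "g = (a,b,c,d)" by (cases g) auto
  have det: "a*d - b*c = 1" using assms g unfolding SL2Z_def by auto
  have "of_int c * z + of_int d \<noteq> 0" using denom_nz[of z c d] SL2Z_nz[of a b c d] assms g by auto
  hence "cmod (of_int c * z + of_int d) > 0" by simp
  then show ?thesis using Im_mob[of a b c d z] det assms g by simp
qed

lemma mmult_assoc: "mmult (mmult A B) C = mmult A (mmult B C)"
  by (cases A; cases B; cases C) (simp add: mmult_def algebra_simps)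

lemma SL2Z_mult: "A \<in> SL2Z \<Longrightarrow> B \<in> SL2Z \<Longrightarrow> mmult A B \<in> SL2Z"
proof -
  assume a: "A \<in> SL2Z" "B \<in> SL2Z"
  obtain a b c d where A: "A = (a,b,c,d)" by (cases A) auto
  obtain a' b' c' d' where B: "B = (a',b',c',d')" by (cases B) auto
  have "(a*a' + b*c')*(c*b' + d*d') - (a*b' + b*d')*(c*a' + d*c') = (a*d-b*c)*(a'*d'-b'*c')"
    by (simp add: algebra_simps)
  then show ?thesis using a A B unfolding SL2Z_def mmult_def by auto
qed

lemma SL2Z_minv: "A \<in> SL2Z \<Longrightarrow> minv A \<in> SL2Z"
  by (cases A) (auto simp: SL2Z_def minv_def algebra_simps)

lemma minv_mult: "A \<in> SL2Z \<Longrightarrow> mmult (minv A) A = (1,0,0,1)"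
  by (cases A) (auto simp: SL2Z_def minv_def mmult_def algebra_simps)

lemma mob_id: "mob (1,0,0,1) z = z"
  by (simp add: mob_def)

lemma mob_inv:
  assumes "A \<in> SL2Z" "Im z > 0" shows "mob (minv A) (mob A z) = z"
proof -
  obtain a b c d where A: "A = (a,b,c,d)" by (cases A) auto
  have "mob (mmult (minv A) A) z = mob (minv A) (mob A z)"
    apply (rule mob_mult) using denom_nz[of z c d] SL2Z_nz[of a b c d] assms A by auto
  then show ?thesis using minv_mult[OF assms(1)] mob_id by simp
qed

lemma mob_SL2Z_comp:
  assumes "B \<in> SL2Z" "Im z > 0" shows "mob (mmult A B) z = mob A (mob B z)"
proof -
  obtain a b c d where B: "B = (a,b,c,d)" by (cases B) auto
  show ?thesis
    apply (rule mob_mult) using denom_nz[of z c d] SL2Z_nz[of a b c d] assms B by auto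
qed

lemma orbit_SL2Z_mob:
  assumes "\<sigma> \<in> SL2Z" "Im u > 0"
  shows "orbit SL2Z (mob \<sigma> u) = orbit SL2Z u"
proof
  show "orbit SL2Z (mob \<sigma> u) \<subseteq> orbit SL2Z u"
  proof
    fix w assume "w \<in> orbit SL2Z (mob \<sigma> u)"
    then obtain g where g: "g \<in> SL2Z" "w = mob g (mob \<sigma> u)" unfolding orbit_def by auto
    hence "w = mob (mmult g \<sigma>) u" using mob_SL2Z_comp assms by simp
    then show "w \<in> orbit SL2Z u" unfolding orbit_def using SL2Z_mult g assms by blast
  qed
next
  show "orbit SL2Z u \<subseteq> orbit SL2Z (mob \<sigma> u)"
  proof
    fix w assume "w \<in> orbit SL2Z u"
    then obtain g where g: "g \<in> SL2Z" "w = mob g u" unfolding orbit_def by auto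
    have pos: "Im (mob \<sigma> u) > 0" using SL2Z_Im_pos assms by simp
    have "w = mob g (mob (minv \<sigma>) (mob \<sigma> u))" using g mob_inv assms by simp
    also have "\<dots> = mob (mmult g (minv \<sigma>)) (mob \<sigma> u)"
      using mob_SL2Z_comp[OF SL2Z_minv[OF assms(1)] pos] by simp
    finally show "w \<in> orbit SL2Z (mob \<sigma> u)" unfolding orbit_def
      using SL2Z_mult[OF g(1) SL2Z_minv[OF assms(1)]] by blast
  qed
qed


lemma Gamma_minv: "h \<in> Gamma n \<Longrightarrow> minv h \<in> Gamma n"
  by (cases h) (auto simp: Gamma_def minv_def SL2Z_def algebra_simps)

lemma Gamma_SL2Z: "h \<in> Gamma n \<Longrightarrow> h \<in> SL2Z"
  by (cases h) (auto simp: Gamma_def)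

lemma Complex_shift: "Complex (Re v + t) (Im v) = v + of_real t"
  by (simp add: complex_eq_iff)

lemma shift_conj:
  assumes h: "h \<in> Gamma n" and n: "n \<ge> 1" and u: "Im u > 0"
  shows "\<exists>\<sigma>\<in>SL2Z. mob \<sigma> (u + of_real (real j / real n)) = mob h u + of_real (real j / real n)"
proof -
  obtain a b c dd where hh: "h = (a,b,c,dd)" by (cases h) auto
  define N where "N = int n"
  have det: "a*dd - b*c = 1" and cdv: "N^2 dvd c" and md: "a mod N = dd mod N"
    using h hh unfolding Gamma_def SL2Z_def N_def by auto
  obtain c2 where c2: "c = N^2 * c2" using cdv by blast
  have "N dvd dd - a" using md by (metis mod_eq_dvd_iff)
  then obtain t where t: "dd - a = N * t" by blast
  define J where "J = int j"
  define \<sigma> where "\<sigma> = (a + J*N*c2, b + J*t - J^2*c2, N^2*c2, dd - J*N*c2)"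
  have "(a + J*N*c2)*(dd - J*N*c2) - (b + J*t - J^2*c2)*(N^2*c2)
        = (a*dd - b*(N^2*c2)) + J*N*c2*(dd - a) - J*t*N^2*c2"
    by (simp add: algebra_simps power2_eq_square)
  also have "\<dots> = 1" using det c2 t by (simp add: algebra_simps power2_eq_square)
  finally have sl: "\<sigma> \<in> SL2Z" unfolding \<sigma>_def SL2Z_def by simp
  define s where "s = real j / real n"
  have Npos: "real n > 0" using n by simp
  have sN: "of_real s * of_int N = (of_int J :: complex)"
    using Npos unfolding s_def N_def J_def by (simp add: field_simps)
  have nz: "of_int c * u + of_int dd \<noteq> 0"
    using denom_nz[of u c dd] SL2Z_nz[of a b c dd] Gamma_SL2Z[OF h] hh u by auto
  let ?s = "of_real s :: complex"
  have ea: "(of_int (a + J*N*c2) :: complex) = of_int a + ?s * of_int c"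
    using sN c2 by (simp add: power2_eq_square algebra_simps)
  have eb: "(of_int (b + J*t - J^2*c2) :: complex) = of_int b + ?s * (of_int dd - of_int a) - ?s^2 * of_int c"
  proof -
    have "(of_int (b + J*t - J^2*c2) :: complex) = of_int b + of_int J * of_int t - of_int J ^2 * of_int c2" by simp
    also have "\<dots> = of_int b + (?s * of_int N) * of_int t - (?s * of_int N)^2 * of_int c2" using sN by simp
    also have "\<dots> = of_int b + ?s * (of_int dd - of_int a) - ?s^2 * of_int c"
    proof -
      have "(of_int dd - of_int a :: complex) = of_int N * of_int t" using t by (metis of_int_diff of_int_mult)
      moreover have "(of_int c :: complex) = of_int N ^2 * of_int c2" using c2 by simp
      ultimately show ?thesis by (simp add: algebra_simps power2_eq_square)
    qed
    finally show ?thesis .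
  qed
  have ed: "(of_int (dd - J*N*c2) :: complex) = of_int dd - ?s * of_int c"
    using sN c2 by (simp add: power2_eq_square algebra_simps)
  have ec: "(of_int (N^2*c2) :: complex) = of_int c" using c2 by simp
  have "mob \<sigma> (u + ?s) = ((of_int a + ?s * of_int c) * (u + ?s) + (of_int b + ?s * (of_int dd - of_int a) - ?s^2 * of_int c))
        / (of_int c * (u + ?s) + (of_int dd - ?s * of_int c))"
    unfolding \<sigma>_def mob_def using ea eb ec ed by simp
  also have "\<dots> = ((of_int a * u + of_int b) + ?s * (of_int c * u + of_int dd)) / (of_int c * u + of_int dd)"
    by (simp add: algebra_simps power2_eq_square)
  also have "\<dots> = mob h u + ?s" unfolding hh mob_def using nz by (simp add: field_simps)
  finally show ?thesis using sl unfolding s_def by blast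
qed

lemma R_inv:
  assumes h: "h \<in> Gamma n" and n: "n \<ge> 1" and u: "Im u > 0"
  shows "R n (Re (mob h u)) (Im (mob h u)) = R n (Re u) (Im u)"
proof -
  have "orbit SL2Z (Complex (Re (mob h u) + real j / real n) (Im (mob h u))) =
        orbit SL2Z (Complex (Re u + real j / real n) (Im u))" for j
  proof -
    obtain \<sigma> where s: "\<sigma> \<in> SL2Z" "mob \<sigma> (u + of_real (real j / real n)) = mob h u + of_real (real j / real n)"
      using shift_conj[OF h n u] by blast
    have "Im (u + of_real (real j / real n)) > 0" using u by simp
    then show ?thesis unfolding Complex_shift using orbit_SL2Z_mob[OF s(1)] s(2) by metis
  qed
  then show ?thesis unfolding R_def by simp
qed


lemma conj_T:
  assumes "(m0,b0,q0,e0) \<in> SL2Z"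
  shows "mmult (mmult (m0,b0,q0,e0) (Tk k)) (minv (m0,b0,q0,e0)) = (1 - k*m0*q0, k*m0^2, -k*q0^2, 1 + k*m0*q0)"
proof -
  have "m0*e0 - b0*q0 = 1" using assms unfolding SL2Z_def by simp
  then show ?thesis unfolding mmult_def Tk_def minv_def
    by (simp add: algebra_simps power2_eq_square)
qed

lemma width_set:
  assumes "(m0,b0,q0,e0) \<in> SL2Z" "n \<ge> 1"
  defines "g0 \<equiv> gcd (int n) q0"
  defines "n1 \<equiv> int n div g0"
  shows "{k::int. mmult (mmult (m0,b0,q0,e0) (Tk k)) (minv (m0,b0,q0,e0)) \<in> Gamma n} = {k. n1^2 dvd k}"
proof -
  define N where "N = int n"
  have Npos: "N > 0" using assms N_def by simp
  have g0pos: "g0 > 0" using Npos g0_def N_def by simp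
  have Ng: "N = g0 * n1" using g0_def n1_def N_def by simp
  define q1 where "q1 = q0 div g0"
  have qg: "q0 = g0 * q1" using g0_def q1_def by simp
  have cop: "coprime n1 q1" unfolding n1_def q1_def g0_def using div_gcd_coprime[of "int n" q0] Npos N_def by auto
  have iff: "N^2 dvd k*q0^2 \<longleftrightarrow> n1^2 dvd k" for k
  proof -
    have "N^2 dvd k*q0^2 \<longleftrightarrow> g0^2 * n1^2 dvd g0^2 * (k * q1^2)" using Ng qg by (simp add: algebra_simps power_mult_distrib)
    also have "\<dots> \<longleftrightarrow> n1^2 dvd k * q1^2" using g0pos by simp
    also have "\<dots> \<longleftrightarrow> n1^2 dvd k" using cop by (simp add: coprime_dvd_mult_left_iff)
    finally show ?thesis .
  qed
  have sl: "mmult (mmult (m0,b0,q0,e0) (Tk k)) (minv (m0,b0,q0,e0)) \<in> SL2Z" for k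
    using SL2Z_mult[OF SL2Z_mult[OF assms(1)] SL2Z_minv[OF assms(1)]] by (simp add: Tk_def SL2Z_def)
  have mem: "mmult (mmult (m0,b0,q0,e0) (Tk k)) (minv (m0,b0,q0,e0)) \<in> Gamma n \<longleftrightarrow> n1^2 dvd k" for k
  proof
    assume "mmult (mmult (m0,b0,q0,e0) (Tk k)) (minv (m0,b0,q0,e0)) \<in> Gamma n"
    hence "N^2 dvd -k*q0^2" unfolding conj_T[OF assms(1)] Gamma_def N_def by simp
    then show "n1^2 dvd k" using iff by (metis dvd_minus_iff minus_mult_left)
  next
    assume k: "n1^2 dvd k"
    then obtain t where t: "k = n1^2 * t" by blast
    have d1: "N dvd k*m0*q0" using t Ng qg by (simp add: power2_eq_square algebra_simps)
    have "(1 - k*m0*q0) mod N = 1 mod N" using d1 by (simp add: mod_eq_dvd_iff)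
    moreover have "(1 + k*m0*q0) mod N = 1 mod N" using d1 by (simp add: mod_eq_dvd_iff)
    moreover have "N^2 dvd -k*q0^2" using iff k by simp
    ultimately show "mmult (mmult (m0,b0,q0,e0) (Tk k)) (minv (m0,b0,q0,e0)) \<in> Gamma n"
      using sl[of k] unfolding conj_T[OF assms(1)] Gamma_def N_def by simp
  qed
  then show ?thesis by auto
qed

lemma width_eq:
  assumes "(m0,b0,q0,e0) \<in> SL2Z" "n \<ge> 1"
  defines "g0 \<equiv> gcd (int n) q0"
  defines "n1 \<equiv> int n div g0"
  shows "int (width n (m0,b0,q0,e0)) = n1^2"
proof -
  have ws: "{k::int. mmult (mmult (m0,b0,q0,e0) (Tk k)) (minv (m0,b0,q0,e0)) \<in> Gamma n} = {k. n1^2 dvd k}"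
    using width_set[OF assms(1,2)] unfolding n1_def g0_def .
  have g0pos: "g0 > 0" using assms g0_def by simp
  have "int n = g0 * n1" using g0_def n1_def by simp
  hence n1pos: "n1 > 0" using g0pos assms(2) by (metis of_nat_0_less_iff zero_less_mult_pos le_less_trans zero_less_one le_eq_less_or_eq less_one)
  let ?P = "\<lambda>\<omega>::nat. \<omega> > 0 \<and> {k::int. mmult (mmult (m0,b0,q0,e0) (Tk k)) (minv (m0,b0,q0,e0)) \<in> Gamma n} = {int \<omega> * j | j. True}"
  have P1: "?P (nat (n1^2))" unfolding ws using n1pos by (auto simp: dvd_def)
  have P2: "\<omega> = nat (n1^2)" if "?P \<omega>" for \<omega>
  proof -
    have eq: "{k::int. n1^2 dvd k} = {int \<omega> * j | j. True}" using that ws by simp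
    have "int \<omega> \<in> {k::int. n1^2 dvd k}" unfolding eq by (auto intro: exI[of _ 1])
    hence a: "n1^2 dvd int \<omega>" by simp
    have "n1^2 \<in> {int \<omega> * j | j. True}" unfolding eq[symmetric] by simp
    hence b: "int \<omega> dvd n1^2" by auto
    have "int \<omega> = n1^2" using a b by (simp add: zdvd_antisym_nonneg)
    then show ?thesis by simp
  qed
  have "width n (m0,b0,q0,e0) = nat (n1^2)" unfolding width_def using P1 P2 by (rule the_equality)
  then show ?thesis using n1pos by simp
qed


lemma inv_exists: "coprime (a::int) m \<Longrightarrow> \<exists>x. m dvd a*x - 1"
  using cong_solve_coprime_int[of a m] by (auto simp: cong_iff_dvd_diff)

lemma det_mmult: "mmult (a,b,c,d) (a',b',c',d') = (A,B,C,D) \<Longrightarrow> A*D - B*C = (a*d-b*c)*(a'*d'-b'*c')"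
  unfolding mmult_def by (auto simp: algebra_simps)

lemma key:
  assumes t1: "(m,b,q,e) \<in> SL2Z" and z': "Im z' > 0" and n: "n \<ge> 1"
    and N: "N = int n" and g: "g > 0" and Ng: "N = g*n1" and qg: "q = g*q1"
    and cop: "coprime q1 N" and dI: "dI > 0" and Nd: "N = dI*np"
    and r: "n1*m + int j*q1 = dI*r'" and kr: "np dvd q1*k*r' + 1"
    and D: "D = np*n1" and \<beta>: "D dvd q1*\<beta> - dI*e" and B: "B = \<beta> + n1*k" and A: "A = g*dI"
  shows "orbit SL2Z (mob (m,b,q,e) z' + of_real (real j / real n)) = orbit SL2Z (mob (A, B, 0, D) z')"
proof -
  define J where "J = int j"
  have det: "m*e - b*q = 1" using t1 unfolding SL2Z_def by simp
  have Npos: "N > 0" using N n by simp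
  have n1pos: "n1 > 0" using Npos g Ng by (metis zero_less_mult_pos)
  have nppos: "np > 0" using Npos dI Nd by (metis zero_less_mult_pos)
  have Dpos: "D > 0" using D n1pos nppos by simp
  obtain u where u: "q1*\<beta> - dI*e = D*u" using \<beta> by blast
  obtain v where v: "q1*k*r' + 1 = np*v" using kr by blast
  define s2 where "s2 = - np*u - q1*k"
  have s2: "N*e - B*np*q1 = D*s2"
  proof -
    have "N*e - B*np*q1 = np*(dI*e - q1*\<beta>) - np*n1*q1*k" using Nd B by (simp add: algebra_simps)
    also have "\<dots> = np*(-(D*u)) - np*n1*q1*k" using u by (simp add: algebra_simps)
    also have "\<dots> = D*s2" unfolding s2_def D by (simp add: algebra_simps)
    finally show ?thesis .
  qed
  define X where "X = N*b + J*e - B*r'"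
  have Jq: "J*q1 = dI*r' - n1*m" using r J_def by simp
  have "q1*X = q1*N*b + (J*q1)*e - B*q1*r'" unfolding X_def by (simp add: algebra_simps)
  also have "\<dots> = q1*(g*n1)*b + (dI*r' - n1*m)*e - (\<beta> + n1*k)*q1*r'" using Ng Jq B by simp
  also have "\<dots> = n1*((g*q1)*b - m*e) + r'*(dI*e - q1*\<beta>) - n1*(q1*k*r')" by (simp add: algebra_simps)
  also have "\<dots> = n1*(q*b - m*e) + r'*(dI*e - q1*\<beta>) - n1*(q1*k*r')" using qg by simp
  also have "\<dots> = n1*(-1) + r'*(-(D*u)) - n1*(np*v - 1)"
  proof -
    have "q*b - m*e = -1" using det by (simp add: algebra_simps)
    moreover have "dI*e - q1*\<beta> = -(D*u)" using u by simp
    moreover have "q1*k*r' = np*v - 1" using v by simp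
    ultimately show ?thesis by simp
  qed
  also have "\<dots> = D*(-r'*u - v)" using D by (simp add: algebra_simps)
  finally have qX: "q1*X = D*(-r'*u - v)" .
  have "N*N = (dI*np)*(g*n1)" using Nd Ng by metis
  hence "N*N = D*(dI*g)" using D by (simp add: algebra_simps)
  hence "D dvd N*N" by simp
  hence copD: "coprime q1 D" using cop by (meson coprime_commute coprime_divisors dvd_refl coprime_mult_right_iff)
  have "D dvd q1*X" using qX by simp
  hence "D dvd X" using copD by (metis coprime_commute coprime_dvd_mult_right_iff)
  then obtain s1 where s1: "X = D*s1" by blast
  define \<sigma> where "\<sigma> = (r', s1, np*q1, s2)"
  have prod: "mmult \<sigma> (A,B,0,D) = mmult (N, J, 0, N) (m,b,q,e)"
  proof -
    have "r'*A = g*(dI*r')" using A by (simp add: algebra_simps)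
    also have "\<dots> = g*(n1*m + J*q1)" using r J_def by simp
    also have "\<dots> = N*m + J*q" using Ng qg by (simp add: algebra_simps)
    finally have "r'*A = N*m + J*q" .
    moreover have "r'*B + s1*D = N*b + J*e" using s1 X_def by (simp add: algebra_simps)
    moreover have "np*q1*A = N*q" using A Nd qg by (simp add: algebra_simps)
    moreover have "np*q1*B + s2*D = N*e" using s2 by (simp add: algebra_simps)
    ultimately show ?thesis unfolding \<sigma>_def mmult_def by (simp add: algebra_simps)
  qed
  have sl: "\<sigma> \<in> SL2Z"
  proof -
    obtain P1 P2 P3 P4 where P: "mmult (N, J, 0, N) (m,b,q,e) = (P1,P2,P3,P4)" by (cases "mmult (N, J, 0, N) (m,b,q,e)") auto
    have d1: "P1*P4 - P2*P3 = (N*N - J*0)*(m*e-b*q)" using det_mmult[OF P] .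
    have d2: "P1*P4 - P2*P3 = (r'*s2 - s1*(np*q1))*(A*D - B*0)" using det_mmult[of r' s1 "np*q1" s2 A B 0 D] prod P unfolding \<sigma>_def by simp
    have AD: "A*D = N*N" using A D Nd Ng by (simp add: algebra_simps)
    have "(r'*s2 - s1*(np*q1))*(N*N) = 1*(N*N)" using d1 d2 AD det by simp
    hence "r'*s2 - s1*(np*q1) = 1" using Npos by (metis mult_cancel_right mult_pos_pos less_irrefl)
    then show ?thesis unfolding \<sigma>_def SL2Z_def by simp
  qed
  define w where "w = mob (m,b,q,e) z'"
  have "mob (mmult (N, J, 0, N) (m,b,q,e)) z' = mob (N, J, 0, N) w"
    unfolding w_def by (rule mob_SL2Z_comp[OF t1 z'])
  also have "\<dots> = w + of_real (real j / real n)"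
    unfolding mob_def using Npos N J_def by (simp add: field_simps)
  finally have e1: "mob (mmult (N, J, 0, N) (m,b,q,e)) z' = w + of_real (real j / real n)" .
  have "mob (mmult \<sigma> (A,B,0,D)) z' = mob \<sigma> (mob (A,B,0,D) z')"
    by (rule mob_mult) (use Dpos in simp)
  hence e2: "w + of_real (real j / real n) = mob \<sigma> (mob (A,B,0,D) z')" using e1 prod by simp
  have "A*D > 0" using A D g dI n1pos nppos by simp
  hence "real_of_int A * real_of_int D > 0" by (metis of_int_0_less_iff of_int_mult)
  hence "Im (mob (A,B,0,D) z') > 0" using Im_mob[of A B 0 D z'] z' Dpos by simp
  then show ?thesis using orbit_SL2Z_mob[OF sl] e2 unfolding w_def by simp
qed


lemma point_eq:
  assumes Ng: "N = g*n1" and g: "g > 0" and n1: "n1 > 0" and N: "N = int n" and d: "d dvd n" and n: "n \<ge> 1"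
  shows "Complex ((real_of_int (g * int d) * Re z' + real_of_int \<beta>) / real_of_int ((N div int d) * n1) + real k / real (n div d))
           (real d ^ 2 * Im z' / real_of_int (n1^2))
         = mob (g * int d, \<beta> + n1 * int k, 0, (N div int d) * n1) z'"
proof -
  have dpos: "d > 0" using d n by (metis dvd_0_left_iff gr0I not_one_le_zero)
  obtain np where np: "n = d * np" using d by blast
  have npos: "np > 0" using np n by (metis gr0I mult_0_right not_one_le_zero)
  have nd: "n div d = np" using np dpos by simp
  have Nd: "N div int d = int np" using np N dpos by simp
  have rN: "real_of_int g * real_of_int n1 = real d * real np" using Ng N np
    by (metis of_int_mult of_int_of_nat_eq of_nat_mult)
  have p: "real_of_int g > 0" "real_of_int n1 > 0" "real d > 0" "real np > 0" using g n1 dpos npos by auto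
  show ?thesis unfolding mob_def nd Nd
  proof (simp add: complex_eq_iff, intro conjI)
    show "(real_of_int g * real d * Re z' + real_of_int \<beta>) / (real np * real_of_int n1) + real k / real np =
        (real_of_int g * real d * Re z' + (real_of_int \<beta> + real_of_int n1 * real k)) / (real np * real_of_int n1)"
      using p by (simp add: field_simps)
    have "real d ^ 2 * Im z' / (real_of_int n1)\<^sup>2 = (real d * (real_of_int g * real_of_int n1)) * Im z' / (real np * real_of_int n1 * real_of_int n1)"
      using p by (simp add: rN field_simps power2_eq_square)
    then show "real d ^ 2 * Im z' / (real_of_int n1)\<^sup>2 = real_of_int g * real d * Im z' / (real np * real_of_int n1)"
      using p by (simp add: field_simps power2_eq_square)
  qed
qed


lemma main_eq:
  assumes t1: "(m,b,q,e) \<in> SL2Z" and z': "Im z' > 0" and n: "n \<ge> 1"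
    and N: "N = int n" and g: "g > 0" and Ng: "N = g*n1" and qg: "q = g*q1"
    and cop: "coprime q1 N" and n1: "n1 > 0"
    and bt: "\<And>d. d dvd n \<Longrightarrow> (N div int d) * n1 dvd q1 * bt d - int d * e"
  shows "R n (Re (mob (m,b,q,e) z')) (Im (mob (m,b,q,e) z')) =
    (\<Union>d\<in>{d. d dvd n}. Rpr (n div d)
       ((real_of_int (g * int d) * Re z' + real_of_int (bt d)) / real_of_int ((N div int d) * n1))
       (real d ^ 2 * Im z' / real_of_int (n1^2)))"
    (is "?L = ?R")
proof -
  define w where "w = mob (m,b,q,e) z'"
  have Npos: "N > 0" using N n by simp
  have L: "?L = {orbit SL2Z (w + of_real (real j / real n)) | j. j < n}"
    unfolding R_def Complex_shift w_def by simp
  show ?thesis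
  proof
    show "?L \<subseteq> ?R"
    proof
      fix x assume "x \<in> ?L"
      then obtain j where j: "j < n" "x = orbit SL2Z (w + of_real (real j / real n))" unfolding L by blast
      define r where "r = n1*m + int j*q1"
      define dI where "dI = gcd r N"
      have dIpos: "dI > 0" using Npos dI_def by simp
      define d where "d = nat dI"
      have dId: "dI = int d" using dIpos d_def by simp
      have "dI dvd N" using dI_def by simp
      hence dn: "d dvd n" using dId N by simp
      define np where "np = N div dI"
      define r' where "r' = r div dI"
      have Nd: "N = dI*np" using np_def dI_def by simp
      have rd: "r = dI*r'" using r'_def dI_def by simp
      have copr: "coprime r' np" unfolding r'_def np_def dI_def using div_gcd_coprime[of r N] Npos by auto
      have "np dvd N" using Nd by simp
      hence copq: "coprime q1 np" using cop by (meson coprime_divisors dvd_refl)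
      have "coprime (q1*r') np" using copr copq by simp
      then obtain xx where xx: "np dvd q1*r'*xx - 1" using inv_exists by blast
      define k0 where "k0 = (-xx) mod np"
      have nppos: "np > 0" using Npos Nd dIpos by (metis zero_less_mult_pos)
      have k0r: "0 \<le> k0" "k0 < np" using k0_def nppos by auto
      define s where "s = (-xx) div np"
      have k0e: "k0 = -xx - np*s" using k0_def s_def by (simp add: minus_div_mult_eq_mod[symmetric])
      have eqk: "q1*k0*r' + 1 = -(q1*r'*xx - 1) + np*(-s*q1*r')" unfolding k0e by (simp add: algebra_simps)
      have dv: "np dvd -(q1*r'*xx - 1) + np*(-s*q1*r')" using xx by (simp only: dvd_add dvd_minus_iff dvd_triv_left)
      have kr: "np dvd q1*k0*r' + 1" unfolding eqk by (rule dv)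
      define k where "k = nat k0"
      have kk: "int k = k0" using k_def k0r by simp
      have ndnp: "int (n div d) = np" using N dId np_def by (simp add: zdiv_int)
      have kl: "k < n div d" using kk ndnp k0r by linarith
      have "[k0 * (-(q1*r')) = 1] (mod np)" using kr unfolding cong_iff_dvd_diff
        by (metis (no_types, opaque_lifting) add.commute diff_minus_eq_add dvd_minus_iff minus_mult_right mult.commute mult.left_commute minus_diff_eq)
      hence "coprime k0 np" using coprime_iff_invertible_int by blast
      hence kc: "coprime k (n div d)" using kk ndnp by (metis coprime_int_iff)
      have "orbit SL2Z (mob (m,b,q,e) z' + of_real (real j / real n)) =
            orbit SL2Z (mob (g*dI, bt d + n1*k0, 0, np*n1) z')"
        by (rule key[OF t1 z' n N g Ng qg cop dIpos Nd _ kr refl _ refl refl])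
           (use r_def rd in simp, use bt[OF dn] dId np_def in \<open>simp add: mult.commute\<close>)
      also have "mob (g*dI, bt d + n1*k0, 0, np*n1) z' =
           Complex ((real_of_int (g * int d) * Re z' + real_of_int (bt d)) / real_of_int ((N div int d) * n1) + real k / real (n div d))
           (real d ^ 2 * Im z' / real_of_int (n1^2))"
        using point_eq[OF Ng g n1 N dn n, of z' "bt d" k] dId np_def kk by (simp add: mult.commute)
      finally have "x = orbit SL2Z (Complex ((real_of_int (g * int d) * Re z' + real_of_int (bt d)) / real_of_int ((N div int d) * n1) + real k / real (n div d))
           (real d ^ 2 * Im z' / real_of_int (n1^2)))" using j w_def by simp
      then show "x \<in> ?R" unfolding Rpr_def using dn kl kc by blast
    qed
  next
    show "?R \<subseteq> ?L"
    proof
      fix x assume "x \<in> ?R"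
      then obtain d k where dn: "d dvd n" and kl: "k < n div d" and kc: "coprime k (n div d)"
        and x: "x = orbit SL2Z (Complex ((real_of_int (g * int d) * Re z' + real_of_int (bt d)) / real_of_int ((N div int d) * n1) + real k / real (n div d))
           (real d ^ 2 * Im z' / real_of_int (n1^2)))"
        unfolding Rpr_def by blast
      define dI where "dI = int d"
      have dpos: "d > 0" using dn n by (metis dvd_0_left_iff gr0I not_one_le_zero)
      hence dIpos: "dI > 0" using dI_def by simp
      define np where "np = N div dI"
      have Nd: "N = dI*np" using np_def dI_def dn N by simp
      have ndnp: "int (n div d) = np" using N dI_def np_def by (simp add: zdiv_int)
      have "np dvd N" using Nd by simp
      hence copq: "coprime q1 np" using cop by (meson coprime_divisors dvd_refl)
      have "coprime (int k) np" using kc ndnp by (metis coprime_int_iff)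
      hence "coprime (q1*int k) np" using copq by simp
      then obtain y where y: "np dvd q1*int k*y - 1" using inv_exists by blast
      define r0 where "r0 = -y"
      have "q1*int k*r0 + 1 = -(q1*int k*y - 1)" using r0_def by simp
      moreover have "np dvd -(q1*int k*y - 1)" using y by (simp only: dvd_minus_iff)
      ultimately have kr0: "np dvd q1*int k*r0 + 1" by simp
      obtain x1 where x1: "N dvd q1*x1 - 1" using inv_exists cop by blast
      define c where "c = dI*r0 - n1*m"
      define j0 where "j0 = (x1*c) mod N"
      have j0r: "0 \<le> j0" "j0 < N" using j0_def Npos by auto
      define s where "s = (x1*c) div N"
      have j0e: "j0 = x1*c - N*s" using j0_def s_def by (simp add: minus_div_mult_eq_mod[symmetric])
      have eqj: "q1*j0 - c = (q1*x1 - 1)*c - N*(q1*s)" unfolding j0e by (simp add: algebra_simps)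
      have dv: "N dvd (q1*x1 - 1)*c - N*(q1*s)" using x1 by (simp only: dvd_diff dvd_mult2 dvd_triv_left)
      have "N dvd q1*j0 - c" unfolding eqj by (rule dv)
      then obtain t where t: "q1*j0 - c = N*t" by blast
      define r' where "r' = r0 + np*t"
      have rr: "n1*m + j0*q1 = dI*r'" unfolding r'_def using t c_def Nd by (simp add: algebra_simps)
      have eqk: "q1*int k*r' + 1 = (q1*int k*r0 + 1) + np*(q1*int k*t)" unfolding r'_def by (simp add: algebra_simps)
      have dv: "np dvd (q1*int k*r0 + 1) + np*(q1*int k*t)" using kr0 by (simp only: dvd_add dvd_triv_left)
      have kr: "np dvd q1*int k*r' + 1" unfolding eqk by (rule dv)
      define j where "j = nat j0"
      have jj: "int j = j0" using j_def j0r by simp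
      have jl: "j < n" using jj j0r N by linarith
      have "orbit SL2Z (mob (m,b,q,e) z' + of_real (real j / real n)) =
            orbit SL2Z (mob (g*dI, bt d + n1*int k, 0, np*n1) z')"
        by (rule key[OF t1 z' n N g Ng qg cop dIpos Nd _ kr refl _ refl refl])
           (use rr jj in simp, use bt[OF dn] dI_def np_def in \<open>simp add: mult.commute\<close>)
      also have "mob (g*dI, bt d + n1*int k, 0, np*n1) z' =
           Complex ((real_of_int (g * int d) * Re z' + real_of_int (bt d)) / real_of_int ((N div int d) * n1) + real k / real (n div d))
           (real d ^ 2 * Im z' / real_of_int (n1^2))"
        using point_eq[OF Ng g n1 N dn n, of z' "bt d" k] dI_def np_def by (simp add: mult.commute)
      finally have "x = orbit SL2Z (w + of_real (real j / real n))" using x w_def by simp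
      then show "x \<in> ?L" unfolding L using jl by blast
    qed
  qed
qed




lemma Gamma_id: "n \<ge> 1 \<Longrightarrow> (1,0,0,1) \<in> Gamma n"
  by (simp add: Gamma_def SL2Z_def)

theorem proposition7p7:
  fixes n :: nat and \<tau> :: mat2
  assumes "n \<ge> 1" and "\<tau> \<in> SL2Z" and "simple_type n \<tau>"
  shows "\<exists>X :: nat \<Rightarrow> real \<Rightarrow> real. \<forall>z z'. Im z > 0 \<longrightarrow> Im z' > 0 \<longrightarrow>
           orbit (Gamma n) z = orbit (Gamma n) (mob \<tau> z') \<longrightarrow>
           R n (Re z) (Im z) =
             (\<Union>d\<in>{d. d dvd n}. Rpr (n div d) (X d (Re z')) (real d ^ 2 * Im z' / real (width n \<tau>)))"
proof -
  obtain \<gamma> where \<gamma>: "\<gamma> \<in> Gamma n" and st: "case mmult \<gamma> \<tau> of (m,b,q,d) \<Rightarrow> gcd (int n ^ 2) q dvd int n"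
    using assms(3) unfolding simple_type_def by (rule bexE)
  obtain m b q e where t1: "mmult \<gamma> \<tau> = (m,b,q,e)" using prod_cases4 by blast
  have gq: "gcd (int n ^ 2) q dvd int n" using st t1 by simp
  have t1SL: "(m,b,q,e) \<in> SL2Z" using SL2Z_mult[OF Gamma_SL2Z[OF \<gamma>] assms(2)] t1 by simp
  obtain m0 b0 q0 e0 where t0: "\<tau> = (m0,b0,q0,e0)" by (cases \<tau>) auto
  obtain ga gb gc gd where gg: "\<gamma> = (ga,gb,gc,gd)" by (cases \<gamma>) auto
  define N where "N = int n"
  have Npos: "N > 0" using assms(1) N_def by simp
  define g where "g = gcd N q"
  have gpos: "g > 0" using Npos g_def by simp
  define n1 where "n1 = N div g"
  define q1 where "q1 = q div g"
  have Ng: "N = g*n1" using g_def n1_def by simp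
  have qg: "q = g*q1" using g_def q1_def by simp
  have n1pos: "n1 > 0" using Npos gpos Ng by (metis zero_less_mult_pos)
  have G: "gcd (N^2) q dvd g" using gq N_def g_def by simp
  have cop: "coprime q1 N"
  proof -
    define h where "h = gcd N q1"
    have "g*h dvd N*N" unfolding h_def using g_def by (simp add: mult_dvd_mono)
    moreover have "g*h dvd q" unfolding h_def qg by (simp add: mult_dvd_mono)
    ultimately have "g*h dvd gcd (N^2) q" by (simp add: power2_eq_square)
    from this G have "g*h dvd g" by (rule dvd_trans)
    hence "\<bar>h\<bar> = 1" using gpos zdvd_mult_cancel1[of g h] by simp
    hence "h = 1" unfolding h_def by simp
    then show ?thesis unfolding h_def by (simp add: coprime_iff_gcd_eq_1 gcd.commute)
  qed
  have qq: "q = gc*m0 + gd*q0" using t1 t0 gg unfolding mmult_def by simp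
  have gcN: "N^2 dvd gc" and gdN: "gd mod N = 1 mod N \<or> gd mod N = (-1) mod N"
    using \<gamma> gg unfolding Gamma_def N_def by auto
  have copgd: "coprime gd N"
  proof -
    obtain s where s: "s = 1 \<or> s = -1" "gd mod N = s mod N" using gdN by blast
    have "N dvd gd - s" using s(2) by (simp add: mod_eq_dvd_iff)
    moreover have "gd*s - 1 = s*(gd - s)" using s(1) by auto
    ultimately have "[gd * s = 1] (mod N)" unfolding cong_iff_dvd_diff by simp
    then show ?thesis using coprime_iff_invertible_int by blast
  qed
  have g0: "gcd N q0 = g"
  proof -
    have "N dvd N^2" by (simp add: power2_eq_square)
    hence NN: "N dvd gc" using gcN by (rule dvd_trans)
    have "gcd N q0 dvd gc" using NN by (rule dvd_trans[OF gcd_dvd1])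
    hence "gcd N q0 dvd gc*m0" by (rule dvd_mult2)
    moreover have "gcd N q0 dvd gd*q0" by (rule dvd_mult[OF gcd_dvd2])
    ultimately have "gcd N q0 dvd q" unfolding qq by (rule dvd_add)
    hence a: "gcd N q0 dvd g" unfolding g_def by simp
    have "g dvd gc" using NN unfolding g_def by (rule dvd_trans[OF gcd_dvd1])
    hence a1: "g dvd gc*m0" by (rule dvd_mult2)
    have a2: "g dvd q" unfolding g_def by (rule gcd_dvd2)
    have "gd*q0 = q - gc*m0" using qq by simp
    hence "g dvd gd*q0" using a1 a2 by (simp add: dvd_diff)
    moreover have "coprime g gd"
    proof -
      have "g dvd N" unfolding g_def by (rule gcd_dvd1)
      moreover have "coprime N gd" using copgd by (simp add: coprime_commute)
      ultimately show ?thesis using coprime_divisors[OF _ dvd_refl] by blast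
    qed
    ultimately have "g dvd q0" by (simp add: coprime_dvd_mult_right_iff)
    hence "g dvd gcd N q0" using g_def by simp
    then show ?thesis using a gpos by (simp add: zdvd_antisym_nonneg)
  qed
  have wid: "real (width n \<tau>) = real_of_int (n1^2)"
  proof -
    have "int (width n \<tau>) = n1^2" unfolding t0 using width_eq[OF assms(2)[unfolded t0] assms(1)] g0 n1_def N_def by simp
    then show ?thesis by (metis of_int_of_nat_eq)
  qed
  define bt where "bt = (\<lambda>d::nat. SOME \<beta>. (N div int d) * n1 dvd q1 * \<beta> - int d * e)"
  have bt: "(N div int d) * n1 dvd q1 * bt d - int d * e" if dn: "d dvd n" for d
  proof -
    define np where "np = N div int d"
    have Nd: "N = int d * np" using dn N_def np_def by simp
    have "N*N = (int d * np)*(g*n1)" by (simp only: Nd[symmetric] Ng[symmetric])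
    hence "N*N = (np*n1)*(int d*g)" by (simp add: algebra_simps)
    hence dd: "np*n1 dvd N*N" by simp
    have "coprime q1 (N*N)" using cop by simp
    from this have "coprime q1 (np*n1)" using coprime_divisors[OF dvd_refl dd] by blast
    then obtain x where x: "np*n1 dvd q1*x - 1" using inv_exists by blast
    have "q1*(x*int d*e) - int d*e = (q1*x - 1)*(int d*e)" by (simp add: algebra_simps)
    hence "np*n1 dvd q1*(x*int d*e) - int d*e" using x by simp
    hence "\<exists>\<beta>. np*n1 dvd q1*\<beta> - int d*e" by blast
    then show ?thesis unfolding bt_def np_def by (rule someI_ex)
  qed
  define X where "X = (\<lambda>d::nat. \<lambda>x::real. (real_of_int (g * int d) * x + real_of_int (bt d)) / real_of_int ((N div int d) * n1))"
  show ?thesis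
  proof (rule exI[of _ X], intro allI impI)
    fix z z' assume z: "Im z > 0" and z': "Im z' > 0" and orb: "orbit (Gamma n) z = orbit (Gamma n) (mob \<tau> z')"
    have "z \<in> orbit (Gamma n) z" unfolding orbit_def using Gamma_id[OF assms(1)] mob_id[of z] by (metis (mono_tags, lifting) mem_Collect_eq)
    hence "z \<in> orbit (Gamma n) (mob \<tau> z')" using orb by simp
    then obtain h where h: "h \<in> Gamma n" "z = mob h (mob \<tau> z')" unfolding orbit_def by blast
    define w where "w = mob (m,b,q,e) z'"
    have v: "Im (mob \<tau> z') > 0" using SL2Z_Im_pos assms(2) z' by simp
    have ww: "w = mob \<gamma> (mob \<tau> z')" unfolding w_def t1[symmetric] by (rule mob_SL2Z_comp[OF assms(2) z'])
    have wpos: "Im w > 0" using SL2Z_Im_pos t1SL z' w_def by simp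
    have tw: "mob \<tau> z' = mob (minv \<gamma>) w" using ww mob_inv[OF Gamma_SL2Z[OF \<gamma>] v] by simp
    have "R n (Re z) (Im z) = R n (Re (mob \<tau> z')) (Im (mob \<tau> z'))" using R_inv[OF h(1) assms(1) v] h(2) by simp
    also have "\<dots> = R n (Re w) (Im w)" unfolding tw by (rule R_inv[OF Gamma_minv[OF \<gamma>] assms(1) wpos])
    also have "\<dots> = (\<Union>d\<in>{d. d dvd n}. Rpr (n div d) (X d (Re z')) (real d ^ 2 * Im z' / real_of_int (n1^2)))"
      unfolding w_def X_def by (rule main_eq[OF t1SL z' assms(1) N_def gpos Ng qg cop n1pos bt])
    finally show "R n (Re z) (Im z) = (\<Union>d\<in>{d. d dvd n}. Rpr (n div d) (X d (Re z')) (real d ^ 2 * Im z' / real (width n \<tau>)))"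
      using wid by simp
  qed
qed

end
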